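(* (i) Let $(D, \{ \prec_\alpha, \succ_\alpha \}_{\alpha \in \Omega}, \odot)$ be a tridendriform family algebra. Then $(D, \{ \prec_\alpha, \succ_\alpha, \curlyvee_{\alpha, \beta} \}_{\alpha, \beta \in \Omega})$ with $x \curlyvee_{\alpha, \beta} y = x \odot y$ for all $\alpha,\beta$ is an NS-family algebra. (ii) Let $A$ be an associative algebra and $\{ R_\alpha : A \to A \}_{\alpha \in \Omega}$ a Rota-Baxter family of weight $\lambda\in\mathbf{k}$. Then $(A, \{ \prec_\alpha, \succ_\alpha, \curlyvee_{\alpha, \beta} \}_{\alpha, \beta \in \Omega})$ is an NS-family algebra, where $a \prec_\alpha b = a \cdot R_\alpha (b)$, $a \succ_\alpha b = R_\alpha (a) \cdot b$ and $a \curlyvee_{\alpha, \beta} b = \lambda a \cdot b$.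
   Context: $\Omega$ is a semigroup. A tridendriform family algebra is a vector space $D$ with bilinear maps $\{\prec_\alpha,\succ_\alpha\}_{\alpha\in\Omega}$ and $\odot$ satisfying, for all $x,y,z$, $\alpha,\beta$: $( x \prec_\alpha y) \prec_\beta z = x \prec_{\alpha \beta} (y \prec_\beta z + y \succ_\alpha z + y \odot z)$; $(x \succ_\alpha y) \prec_\beta z = x \succ_\alpha (y \prec_\beta z)$; $(x \prec_\beta y + x \succ_\alpha y + x \odot y) \succ_{\alpha \beta} z = x \succ_\alpha (y \succ_\beta z)$; $(x \succ_\alpha y) \odot z = x \succ_\alpha (y \odot z)$; $(x \prec_\alpha y) \odot z = x \odot (y \succ_\alpha z)$; $(x \odot y) \prec_\alpha z = x \odot (y \prec_\alpha z)$; $(x \odot y) \odot z = x \odot (y \odot z)$. A Rota-Baxter family of weight $\lambda$: linear maps $R_\alpha$ with $R_\alpha (a) \cdot R_\beta (b) = R_{\alpha \beta} ( R_\alpha (a) \cdot b + a \cdot R_\beta (b) + \lambda a \cdot b )$. An NS-family algebra is a vector space $D$ with bilinear maps $\{ \prec_\alpha, \succ_\alpha, \curlyvee_{\alpha, \beta}\}_{\alpha, \beta \in \Omega}$ such that for all $x,y,z$, $\alpha,\beta,\gamma$: (1) $(x \prec_\alpha y) \prec_\beta z = x \prec_{\alpha \beta} ( y \prec_\beta z + y \succ_\alpha z + y \curlyvee_{\alpha, \beta} z)$; (2) $(x \succ_\alpha y) \prec_\beta z = x \succ_\alpha (y \prec_\beta z)$; (3) $(x \prec_\beta y + x \succ_\alpha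 y + x \curlyvee_{\alpha, \beta} y) \succ_{\alpha \beta} z = x \succ_\alpha (y \succ_\beta z)$; (4) $( x \prec_\beta y + x \succ_\alpha y + x \curlyvee_{\alpha, \beta} y ) \curlyvee_{\alpha \beta, \gamma} z + (x \curlyvee_{\alpha, \beta} y) \prec_\gamma z = x \succ_\alpha (y \curlyvee_{\beta, \gamma} z) + x \curlyvee_{\alpha, \beta \gamma} ( y \prec_\gamma z + y \succ_\beta z + y \curlyvee_{\beta, \gamma} z )$. *)

theory Defs
  imports Main "HOL.Vector_Spaces"
begin

definition bilinear_op :: "('k::field \<Rightarrow> 'v::ab_group_add \<Rightarrow> 'v) \<Rightarrow> ('v \<Rightarrow> 'v \<Rightarrow> 'v) \<Rightarrow> bool" where
  "bilinear_op s f \<longleftrightarrow> (\<forall>x. Vector_Spaces.linear s s (f x)) \<and> (\<forall>y. Vector_Spaces.linear s s (\<lambda>x. f x y))"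

definition tridendriform_family ::
  "('k::field \<Rightarrow> 'v::ab_group_add \<Rightarrow> 'v) \<Rightarrow> ('o::semigroup_mult \<Rightarrow> 'v \<Rightarrow> 'v \<Rightarrow> 'v)
   \<Rightarrow> ('o \<Rightarrow> 'v \<Rightarrow> 'v \<Rightarrow> 'v) \<Rightarrow> ('v \<Rightarrow> 'v \<Rightarrow> 'v) \<Rightarrow> bool" where
  "tridendriform_family s lp rp dot \<longleftrightarrow>
     vector_space s \<and> (\<forall>\<alpha>. bilinear_op s (lp \<alpha>)) \<and> (\<forall>\<alpha>. bilinear_op s (rp \<alpha>)) \<and> bilinear_op s dot \<and>
     (\<forall>x y z \<alpha> \<beta>.
        lp \<beta> (lp \<alpha> x y) z = lp (\<alpha> * \<beta>) x (lp \<beta> y z + rp \<alpha> y z + dot y z) \<and>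
        lp \<beta> (rp \<alpha> x y) z = rp \<alpha> x (lp \<beta> y z) \<and>
        rp (\<alpha> * \<beta>) (lp \<beta> x y + rp \<alpha> x y + dot x y) z = rp \<alpha> x (rp \<beta> y z) \<and>
        dot (rp \<alpha> x y) z = rp \<alpha> x (dot y z) \<and>
        dot (lp \<alpha> x y) z = dot x (rp \<alpha> y z) \<and>
        lp \<alpha> (dot x y) z = dot x (lp \<alpha> y z) \<and>
        dot (dot x y) z = dot x (dot y z))"

definition NS_family ::
  "('k::field \<Rightarrow> 'v::ab_group_add \<Rightarrow> 'v) \<Rightarrow> ('o::semigroup_mult \<Rightarrow> 'v \<Rightarrow> 'v \<Rightarrow> 'v)
   \<Rightarrow> ('o \<Rightarrow> 'v \<Rightarrow> 'v \<Rightarrow> 'v) \<Rightarrow> ('o \<Rightarrow> 'o \<Rightarrow> 'v \<Rightarrow> 'v \<Rightarrow> 'v) \<Rightarrow> bool" where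
  "NS_family s lp rp vee \<longleftrightarrow>
     vector_space s \<and> (\<forall>\<alpha>. bilinear_op s (lp \<alpha>)) \<and> (\<forall>\<alpha>. bilinear_op s (rp \<alpha>)) \<and>
     (\<forall>\<alpha> \<beta>. bilinear_op s (vee \<alpha> \<beta>)) \<and>
     (\<forall>x y z \<alpha> \<beta> \<gamma>.
        lp \<beta> (lp \<alpha> x y) z = lp (\<alpha> * \<beta>) x (lp \<beta> y z + rp \<alpha> y z + vee \<alpha> \<beta> y z) \<and>
        lp \<beta> (rp \<alpha> x y) z = rp \<alpha> x (lp \<beta> y z) \<and>
        rp (\<alpha> * \<beta>) (lp \<beta> x y + rp \<alpha> x y + vee \<alpha> \<beta> x y) z = rp \<alpha> x (rp \<beta> y z) \<and>
        vee (\<alpha> * \<beta>) \<gamma> (lp \<beta> x y + rp \<alpha> x y + vee \<alpha> \<beta> x y) z + lp \<gamma> (vee \<alpha> \<beta> x y) z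
          = rp \<alpha> x (vee \<beta> \<gamma> y z) + vee \<alpha> (\<beta> * \<gamma>) x (lp \<gamma> y z + rp \<beta> y z + vee \<beta> \<gamma> y z))"

definition assoc_algebra :: "('k::field \<Rightarrow> 'a::ring \<Rightarrow> 'a) \<Rightarrow> bool" where
  "assoc_algebra s \<longleftrightarrow> vector_space s \<and> bilinear_op s (\<lambda>a b. a * b)"

definition rota_baxter_family ::
  "('k::field \<Rightarrow> 'a::ring \<Rightarrow> 'a) \<Rightarrow> ('o::semigroup_mult \<Rightarrow> 'a \<Rightarrow> 'a) \<Rightarrow> 'k \<Rightarrow> bool" where
  "rota_baxter_family s R lam \<longleftrightarrow>
     (\<forall>\<alpha>. Vector_Spaces.linear s s (R \<alpha>)) \<and>
     (\<forall>\<alpha> \<beta> a b. R \<alpha> a * R \<beta> b = R (\<alpha> * \<beta>) (R \<alpha> a * b + a * R \<beta> b + s lam (a * b)))"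

end

theory Submission
  imports Defs
begin

lemma bil_facts:
  assumes "bilinear_op s f"
  shows "f (a + b) c = f a c + f b c" "f c (a + b) = f c a + f c b"
    "f (s k a) c = s k (f a c)" "f c (s k a) = s k (f c a)"
  using assms unfolding bilinear_op_def linear_iff by auto

lemma vs_add:
  assumes "vector_space s"
  shows "s k (a + b) = s k a + s k b"
  using assms unfolding vector_space_def module_def by auto

lemma vs_ss:
  assumes "vector_space s"
  shows "s a (s b x) = s b (s a x)"
  using assms unfolding vector_space_def module_def by (metis mult.commute)

lemma part1:
  assumes "tridendriform_family s lp rp dot"
  shows "NS_family s lp rp (\<lambda>\<alpha> \<beta>. dot)"
proof -
  have b: "bilinear_op s dot" using assms unfolding tridendriform_family_def by auto
  note d = bil_facts[OF b]
  show ?thesis using assms unfolding tridendriform_family_def NS_family_def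
    by (auto simp: d algebra_simps)
qed

lemma part2:
  fixes t :: "'k::field \<Rightarrow> 'a::ring \<Rightarrow> 'a" and R :: "'o::semigroup_mult \<Rightarrow> 'a \<Rightarrow> 'a"
  assumes A: "assoc_algebra t" and RB: "rota_baxter_family t R lam"
  shows "NS_family t (\<lambda>\<alpha> a b. a * R \<alpha> b) (\<lambda>\<alpha> a b. R \<alpha> a * b) (\<lambda>\<alpha> \<beta> a b. t lam (a * b))"
proof -
  have vs: "vector_space t" and b: "bilinear_op t (\<lambda>a b. a * b)"
    using A unfolding assoc_algebra_def by auto
  note m = bil_facts[OF b]
  have ta: "\<And>k a b. t k (a + b) = t k a + t k b" using vs_add[OF vs] .
  have tl: "\<And>k a c. t k a * c = t k (a * c)" using m(3) by metis
  have tr: "\<And>k a c. c * t k a = t k (c * a)" using m(4) by metis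
  have lin: "\<And>\<alpha>. Vector_Spaces.linear t t (R \<alpha>)" using RB unfolding rota_baxter_family_def by auto
  have Ra: "\<And>\<alpha> a b. R \<alpha> (a + b) = R \<alpha> a + R \<alpha> b" using lin unfolding linear_iff by auto
  have Rs: "\<And>\<alpha> k a. R \<alpha> (t k a) = t k (R \<alpha> a)" using lin unfolding linear_iff by auto
  have rb: "\<And>\<alpha> \<beta> a b. R \<alpha> a * R \<beta> b = R (\<alpha> * \<beta>) (R \<alpha> a * b + a * R \<beta> b + t lam (a * b))"
    using RB unfolding rota_baxter_family_def by auto
  have bl: "\<forall>\<alpha>. bilinear_op t (\<lambda>a b. a * R \<alpha> b)"
    using b lin unfolding bilinear_op_def linear_iff by (auto simp: distrib_left distrib_right tr tl)
  have br: "\<forall>\<alpha>. bilinear_op t (\<lambda>a b. R \<alpha> a * b)"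
    using b lin unfolding bilinear_op_def linear_iff by (auto simp: distrib_left distrib_right tr tl)
  have bv: "\<forall>\<alpha> \<beta>. bilinear_op t (\<lambda>a b. t lam (a * b))"
  proof (intro allI)
    fix \<alpha> \<beta> :: 'o
    show "bilinear_op t (\<lambda>a b. t lam (a * b))"
      using b vs unfolding bilinear_op_def linear_iff
      by (auto simp: distrib_left distrib_right ta vs_ss[OF vs])
  qed
  show ?thesis unfolding NS_family_def
  proof (intro conjI vs bl br bv allI)
    fix x y z :: 'a and \<alpha> \<beta> \<gamma> :: 'o
    show "x * R \<alpha> y * R \<beta> z = x * R (\<alpha> * \<beta>) (y * R \<beta> z + R \<alpha> y * z + t lam (y * z))"
      by (simp add: mult.assoc rb algebra_simps)
    show "R \<alpha> x * y * R \<beta> z = R \<alpha> x * (y * R \<beta> z)" by (simp add: mult.assoc)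
    show "R (\<alpha> * \<beta>) (x * R \<beta> y + R \<alpha> x * y + t lam (x * y)) * z = R \<alpha> x * (R \<beta> y * z)"
      by (simp add: mult.assoc[symmetric] rb algebra_simps)
    show "t lam ((x * R \<beta> y + R \<alpha> x * y + t lam (x * y)) * z) + t lam (x * y) * R \<gamma> z =
          R \<alpha> x * t lam (y * z) + t lam (x * (y * R \<gamma> z + R \<beta> y * z + t lam (y * z)))"
      by (simp add: distrib_left distrib_right ta tl tr mult.assoc algebra_simps)
  qed
qed

theorem proposition3p16:
  fixes s :: "'k::field \<Rightarrow> 'v::ab_group_add \<Rightarrow> 'v"
    and lp rp :: "'o::semigroup_mult \<Rightarrow> 'v \<Rightarrow> 'v \<Rightarrow> 'v"
    and dot :: "'v \<Rightarrow> 'v \<Rightarrow> 'v"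
    and t :: "'k \<Rightarrow> 'a::ring \<Rightarrow> 'a"
    and R :: "'o \<Rightarrow> 'a \<Rightarrow> 'a"
    and lam :: 'k
  shows "(tridendriform_family s lp rp dot \<longrightarrow> NS_family s lp rp (\<lambda>\<alpha> \<beta>. dot)) \<and>
         (assoc_algebra t \<and> rota_baxter_family t R lam \<longrightarrow>
           NS_family t (\<lambda>\<alpha> a b. a * R \<alpha> b) (\<lambda>\<alpha> a b. R \<alpha> a * b) (\<lambda>\<alpha> \<beta> a b. t lam (a * b)))"
  using part1 part2 by blast

end
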